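(* Let $\theta>0$ and $\mu\in(0,\theta^{-1})$, and consider the system $$\dot c=D\left(\begin{bmatrix}1+\theta\\1-\mu\theta\end{bmatrix}-c\right)+\begin{bmatrix}-1\\ \mu\end{bmatrix}\theta c_1c_2^2,\qquad c=(c_1,c_2)'\in\operatorname{int}(\mathbb{R}_+^2),\ D\in[0,D_{\max}].$$ If $D_{\max}>(1+\mu)^2$ and $D_{\max}>\frac{(1+\mu)(\theta(1+\mu)^2+1)}{\mu\theta}$, then there exists a smooth feedback $\tilde k:\operatorname{int}(\mathbb{R}_+^2)\to[0,D_{\max}]$ with $\tilde k(1,1)=1$ such that the equilibrium $(1,1)'$ is uniformly globally asymptotically stable on $\operatorname{int}(\mathbb{R}_+^2)$ for the closed-loop system with $D=\tilde k(c)$, i.e. there exists $\sigma\in\mathcal{KL}$ with $|\ln c(t)|\le\sigma(|\ln c(0)|,t)$ for all closed-loop solutions and $t\ge0$, where $\ln c=(\ln c_1,\ln c_2)'$.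
   Context: $\operatorname{int}(\mathbb{R}_+^2)$ is the open positive quadrant. $\mathcal{KL}$: continuous $\sigma:\mathbb{R}_+^2\to\mathbb{R}_+$ with $\sigma(\cdot,t)$ increasing, $\sigma(0,t)=0$, and $\sigma(s,\cdot)$ non-increasing tending to $0$. *)

theory Defs
  imports "HOL-Analysis.Analysis"
begin

definition quadrant :: "(real \<times> real) set" where
  "quadrant = {x. fst x > 0 \<and> snd x > 0}"

text \<open>C-infinity (smooth) real functions on an open subset of R^2: differentiable,
  with both partial derivatives again smooth (coinductively, i.e. all orders).\<close>
coinductive smooth_on2 :: "(real \<times> real) set \<Rightarrow> (real \<times> real \<Rightarrow> real) \<Rightarrow> bool"
  for S where
  "(\<And>x. x \<in> S \<Longrightarrow> (f has_derivative (\<lambda>h. fst h * g1 x + snd h * g2 x)) (at x))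
   \<Longrightarrow> smooth_on2 S g1 \<Longrightarrow> smooth_on2 S g2 \<Longrightarrow> smooth_on2 S f"

definition KL :: "(real \<Rightarrow> real \<Rightarrow> real) \<Rightarrow> bool" where
  "KL \<sigma> \<longleftrightarrow>
     continuous_on ({0..} \<times> {0..}) (\<lambda>(s, t). \<sigma> s t) \<and>
     (\<forall>s\<ge>0. \<forall>t\<ge>0. \<sigma> s t \<ge> 0) \<and>
     (\<forall>t\<ge>0. \<sigma> 0 t = 0 \<and> strict_mono_on {0..} (\<lambda>s. \<sigma> s t)) \<and>
     (\<forall>s\<ge>0. (\<forall>t1 t2. 0 \<le> t1 \<longrightarrow> t1 \<le> t2 \<longrightarrow> \<sigma> s t2 \<le> \<sigma> s t1) \<and>
             ((\<lambda>t. \<sigma> s t) \<longlongrightarrow> 0) at_top)"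

definition rhs :: "real \<Rightarrow> real \<Rightarrow> real \<Rightarrow> real \<times> real \<Rightarrow> real \<times> real" where
  "rhs \<theta> \<mu> D c =
     (D * (1 + \<theta> - fst c) - \<theta> * fst c * (snd c)\<^sup>2,
      D * (1 - \<mu> * \<theta> - snd c) + \<mu> * \<theta> * fst c * (snd c)\<^sup>2)"

definition lnv :: "real \<times> real \<Rightarrow> real \<times> real" where
  "lnv c = (ln (fst c), ln (snd c))"

end

theory Submission
  imports Defs "HOL-Computational_Algebra.Polynomial" "HOL-Real_Asymp.Real_Asymp"
begin


coinductive smooth1 :: "(real \<Rightarrow> real) \<Rightarrow> bool" where
  "(\<And>x. (f has_real_derivative f' x) (at x)) \<Longrightarrow> smooth1 f' \<Longrightarrow> smooth1 f"


definition dr :: "(real \<Rightarrow> real) \<Rightarrow> (real \<Rightarrow> real)" where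
  "dr f = (SOME f'. (\<forall>x. (f has_real_derivative f' x) (at x)) \<and> smooth1 f')"

lemma dr: assumes "smooth1 f" shows "\<And>x. (f has_real_derivative dr f x) (at x)" "smooth1 (dr f)"
proof -
  from assms obtain f' where "\<forall>x. (f has_real_derivative f' x) (at x)" "smooth1 f'"
    by (cases rule: smooth1.cases) auto
  then have ex: "\<exists>f'. (\<forall>x. (f has_real_derivative f' x) (at x)) \<and> smooth1 f'" by blast
  have "(\<forall>x. (f has_real_derivative dr f x) (at x)) \<and> smooth1 (dr f)"
    unfolding dr_def by (rule someI_ex[OF ex])
  then show "\<And>x. (f has_real_derivative dr f x) (at x)" "smooth1 (dr f)" by auto
qed

lemma smooth1_sum_prod:
  assumes "\<forall>(f,g)\<in>set L. smooth1 f \<and> smooth1 g"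
  shows "smooth1 (\<lambda>x. \<Sum>(f,g)\<leftarrow>L. f x * g x)"
proof -
  let ?X = "{h. \<exists>L. (\<forall>(f,g)\<in>set L. smooth1 f \<and> smooth1 g) \<and> h = (\<lambda>x. \<Sum>(f,g)\<leftarrow>L. f x * g x)}"
  have "h \<in> ?X \<Longrightarrow> smooth1 h" for h
  proof (coinduction arbitrary: h rule: smooth1.coinduct)
    case (smooth1 h)
    then obtain L where L: "\<forall>(f,g)\<in>set L. smooth1 f \<and> smooth1 g" and h: "h = (\<lambda>x. \<Sum>(f,g)\<leftarrow>L. f x * g x)"
      by auto
    define L' where "L' = concat (map (\<lambda>(f,g). [(dr f, g), (f, dr g)]) L)"
    have L': "\<forall>(f,g)\<in>set L'. smooth1 f \<and> smooth1 g" using L by (auto simp: L'_def dr)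
    have "(h has_real_derivative (\<Sum>(f,g)\<leftarrow>L'. f x * g x)) (at x)" for x
      using L unfolding h L'_def
    proof (induction L)
      case Nil then show ?case by simp
    next
      case (Cons fg L)
      obtain f g where fg: "fg = (f,g)" by fastforce
      have sf: "smooth1 f" "smooth1 g" using Cons.prems fg by auto
      have "((\<lambda>x. f x * g x) has_real_derivative (dr f x * g x + f x * dr g x)) (at x)"
        using DERIV_mult[OF dr(1)[OF sf(1)] dr(1)[OF sf(2)]] by (simp add: mult.commute)
      moreover have "\<forall>(f,g)\<in>set L. smooth1 f \<and> smooth1 g" using Cons.prems by auto
      note DERIV_add[OF calculation(1) Cons.IH[OF this]]
      then show ?case by (simp add: fg add.assoc)
    qed
    then show ?case using L'
      by (intro exI[of _ h] exI[of _ "\<lambda>x. \<Sum>(f,g)\<leftarrow>L'. f x * g x"]) blast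
  qed
  then show ?thesis using assms by blast
qed

lemma smooth1_mult: "smooth1 f \<Longrightarrow> smooth1 g \<Longrightarrow> smooth1 (\<lambda>x. f x * g x)"
  using smooth1_sum_prod[of "[(f,g)]"] by simp

lemma smooth1_const: "smooth1 (\<lambda>x. c)"
proof -
  have "h \<in> {\<lambda>x. c| c. True} \<Longrightarrow> smooth1 h" for h
    by (coinduction arbitrary: h rule: smooth1.coinduct) (auto intro!: exI[of _ "\<lambda>x. 0"])
  then show ?thesis by blast
qed

lemma smooth1_id: "smooth1 (\<lambda>x. x)"
  by (rule smooth1.intros[where f'="\<lambda>x. 1"]) (auto intro: smooth1_const derivative_eq_intros)

lemma smooth1_add: "smooth1 f \<Longrightarrow> smooth1 g \<Longrightarrow> smooth1 (\<lambda>x. f x + g x)"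
  using smooth1_sum_prod[of "[(f,\<lambda>x. 1),(g,\<lambda>x. 1)]"] by (simp add: smooth1_const)

lemma smooth1_exp_mult:
  assumes "smooth1 g" "smooth1 h" shows "smooth1 (\<lambda>x. exp (g x) * h x)"
proof -
  let ?X = "{F. \<exists>g h. smooth1 g \<and> smooth1 h \<and> F = (\<lambda>x. exp (g x) * h x)}"
  have "F \<in> ?X \<Longrightarrow> smooth1 F" for F
  proof (coinduction arbitrary: F rule: smooth1.coinduct)
    case (smooth1 F)
    then obtain g h where gh: "smooth1 g" "smooth1 h" "F = (\<lambda>x. exp (g x) * h x)" by auto
    have der: "\<forall>x. (F has_real_derivative exp (g x) * (dr g x * h x + dr h x)) (at x)"
      unfolding gh(3) apply (intro allI)
      by (rule derivative_eq_intros dr[OF gh(1)] dr[OF gh(2)] refl | simp add: algebra_simps)+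
    moreover have "smooth1 (\<lambda>x. dr g x * h x + dr h x)"
      by (intro smooth1_add smooth1_mult dr gh)
    then have "(\<lambda>x. exp (g x) * (dr g x * h x + dr h x)) \<in> ?X"
      using gh(1) by (intro CollectI exI[of _ g] exI[of _ "\<lambda>x. dr g x * h x + dr h x"]) simp
    with der show ?case by (intro exI[of _ F] exI[of _ "\<lambda>x. exp (g x) * (dr g x * h x + dr h x)"]) blast
  qed
  then show ?thesis using assms by blast
qed

lemma smooth1_exp: "smooth1 g \<Longrightarrow> smooth1 (\<lambda>x. exp (g x))"
  using smooth1_exp_mult[of g "\<lambda>x. 1"] by (simp add: smooth1_const)

lemma smooth1_shift: assumes "smooth1 f" shows "smooth1 (\<lambda>x. f (x - c))"
proof -
  have "F \<in> {\<lambda>x. f (x - c) | f. smooth1 f} \<Longrightarrow> smooth1 F" for F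
  proof (coinduction arbitrary: F rule: smooth1.coinduct)
    case (smooth1 F)
    then obtain f where f: "smooth1 f" "F = (\<lambda>x. f (x - c))" by auto
    have "(F has_real_derivative dr f (x - c)) (at x)" for x
    proof -
      have "((\<lambda>x. x - c) has_real_derivative 1) (at x)" by (auto intro!: derivative_eq_intros)
      from DERIV_chain2[OF dr(1)[OF f(1)] this] show ?thesis unfolding f(2) by simp
    qed
    then show ?case using dr(2)[OF f(1)] by (intro exI[of _ F] exI[of _ "\<lambda>x. dr f (x - c)"]) blast
  qed
  then show ?thesis using assms by blast
qed




definition sb :: "real \<Rightarrow> real" where "sb x = (if 0 < x then exp (- 1 / x) else 0)"

lemma poly_exp_lim: "((\<lambda>u::real. poly (Q::real poly) u * exp (- u)) \<longlongrightarrow> 0) at_top"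
proof -
  have "((\<lambda>u. \<Sum>i\<le>degree Q. coeff Q i * (u ^ i / exp u)) \<longlongrightarrow> (\<Sum>i\<le>degree Q. coeff Q i * 0)) at_top"
    by (intro tendsto_sum tendsto_mult tendsto_const tendsto_power_div_exp_0)
  then show ?thesis
    by (simp add: poly_altdef sum_divide_distrib exp_minus field_simps)
qed

definition FP :: "real poly \<Rightarrow> real \<Rightarrow> real" where
  "FP P x = (if 0 < x then poly P (1 / x) * exp (- 1 / x) else 0)"

lemma FP_deriv: "(FP P has_real_derivative FP (monom 1 2 * (P - pderiv P)) x) (at x)"
proof -
  consider "x > 0" | "x < 0" | "x = 0" by linarith
  then show ?thesis
  proof cases
    case 1
    have "((\<lambda>y. poly P (1 / y) * exp (- 1 / y)) has_real_derivative
        poly (pderiv P) (1 / x) * (- 1 / x^2) * exp (- 1 / x) + poly P (1 / x) * (exp (- 1 / x) * (1 / x^2))) (at x)"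
      using 1 by (auto intro!: derivative_eq_intros simp: power2_eq_square field_simps)
    then have "((\<lambda>y. poly P (1 / y) * exp (- 1 / y)) has_real_derivative FP (monom 1 2 * (P - pderiv P)) x) (at x)"
      using 1 by (simp add: FP_def poly_monom field_simps power2_eq_square)
    then show ?thesis
      by (rule has_field_derivative_transform_within_open[where S="{0<..}"]) (use 1 in \<open>auto simp: FP_def\<close>)
  next
    case 2
    have "((\<lambda>y. 0) has_real_derivative FP (monom 1 2 * (P - pderiv P)) x) (at x)"
      using 2 by (simp add: FP_def)
    then show ?thesis
      by (rule has_field_derivative_transform_within_open[where S="{..<0}"]) (use 2 in \<open>auto simp: FP_def\<close>)
  next
    case 3
    have r: "((\<lambda>y. (FP P y - FP P 0) / (y - 0)) \<longlongrightarrow> 0) (at_right 0)"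
    proof -
      have "((\<lambda>y. poly (pCons 0 P) (inverse y) * exp (- inverse y)) \<longlongrightarrow> 0) (at_right 0)"
        using filterlim_compose[OF poly_exp_lim filterlim_inverse_at_top_right, of "pCons 0 P"] by (simp add: o_def)
      then show ?thesis
        apply (rule tendsto_cong[THEN iffD1, rotated])
        by (auto simp: eventually_at_right_less FP_def divide_inverse mult_ac intro!: eventually_mono[OF eventually_at_right_less[of 0]])
    qed
    have l: "((\<lambda>y. (FP P y - FP P 0) / (y - 0)) \<longlongrightarrow> 0) (at_left 0)"
      apply (rule tendsto_cong[THEN iffD1, OF _ tendsto_const])
      using eventually_at_left_real[where a=0 and b="-1"] by (rule eventually_mono) (auto simp: FP_def)
    have "((\<lambda>y. (FP P y - FP P 0) / (y - 0)) \<longlongrightarrow> 0) (at 0)"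
      using filterlim_split_at[OF l r] .
    then show ?thesis using 3 by (simp add: has_field_derivative_iff FP_def)
  qed
qed

lemma smooth1_FP: "smooth1 (FP P)"
proof -
  have "F \<in> range FP \<Longrightarrow> smooth1 F" for F
  proof (coinduction arbitrary: F rule: smooth1.coinduct)
    case (smooth1 F)
    then obtain P where "F = FP P" by auto
    then show ?case using FP_deriv[of P]
      by (intro exI[of _ F] exI[of _ "FP (monom 1 2 * (P - pderiv P))"]) auto
  qed
  then show ?thesis by blast
qed

lemma sb_FP: "sb = FP 1" by (auto simp: sb_def FP_def fun_eq_iff)

lemma smooth1_sb: "smooth1 sb" unfolding sb_FP by (rule smooth1_FP)




definition tm :: "(real \<Rightarrow> real) \<times> nat \<times> nat \<Rightarrow> real \<times> real \<Rightarrow> real" where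
  "tm = (\<lambda>(h,a,b) c. h (fst c * (snd c)\<^sup>2) * fst c ^ a * snd c ^ b)"

definition d1L where "d1L L = concat (map (\<lambda>(h,a,b). [(dr h, a, b + 2), ((\<lambda>y. real a * h y), a - 1, b)]) L)"
definition d2L where "d2L L = concat (map (\<lambda>(h,a,b). [((\<lambda>y. 2 * dr h y), a + 1, b + 1), ((\<lambda>y. real b * h y), a, b - 1)]) L)"

lemma tm_deriv:
  assumes "smooth1 h"
  shows "(tm (h,a,b) has_derivative (\<lambda>q. fst q * (\<Sum>t\<leftarrow>d1L [(h,a,b)]. tm t x) + snd q * (\<Sum>t\<leftarrow>d2L [(h,a,b)]. tm t x))) (at x)"
proof -
  obtain u v where x: "x = (u,v)" by fastforce
  have hd: "(h has_real_derivative dr h (u * v^2)) (at (u * v^2))" using dr(1)[OF assms] .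
  have A: "((\<lambda>c. fst c * (snd c)\<^sup>2) has_derivative (\<lambda>q. fst q * v\<^sup>2 + u * (2 * v * snd q))) (at (u,v))"
    by (auto intro!: derivative_eq_intros simp: power2_eq_square algebra_simps)
  have B: "((\<lambda>c. h (fst c * (snd c)\<^sup>2)) has_derivative (\<lambda>q. (fst q * v\<^sup>2 + u * (2 * v * snd q)) * dr h (u * v\<^sup>2))) (at (u,v))"
    using DERIV_compose_FDERIV[of h "dr h (u * v\<^sup>2)" "\<lambda>c. fst c * (snd c)\<^sup>2" "(u,v)", OF _ A] hd by simp
  have C: "((\<lambda>c. fst c ^ a) has_derivative (\<lambda>q. real a * u ^ (a - 1) * fst q)) (at (u,v))"
    by (auto intro!: derivative_eq_intros)
  have D: "((\<lambda>c. snd c ^ b) has_derivative (\<lambda>q. real b * v ^ (b - 1) * snd q)) (at (u,v))"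
    by (auto intro!: derivative_eq_intros)
  have "((\<lambda>c. h (fst c * (snd c)\<^sup>2) * fst c ^ a * snd c ^ b) has_derivative
     (\<lambda>q. (h (u * v\<^sup>2) * u ^ a) * (real b * v ^ (b - 1) * snd q) +
        (h (u * v\<^sup>2) * (real a * u ^ (a - 1) * fst q) + (fst q * v\<^sup>2 + u * (2 * v * snd q)) * dr h (u * v\<^sup>2) * u ^ a) * v ^ b)) (at (u,v))"
    using has_derivative_mult[OF has_derivative_mult[OF B C] D] by simp
  moreover have "tm (h,a,b) = (\<lambda>c. h (fst c * (snd c)\<^sup>2) * fst c ^ a * snd c ^ b)" by (simp add: tm_def)
  ultimately show ?thesis unfolding x
    apply simp
    apply (erule has_derivative_eq_rhs)
    apply (rule ext)
    apply (cases a; cases b)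
    by (auto simp: tm_def d1L_def d2L_def algebra_simps power2_eq_square)
qed

lemma d1L_cons: "d1L (t # L) = d1L [t] @ d1L L" by (simp add: d1L_def)
lemma d2L_cons: "d2L (t # L) = d2L [t] @ d2L L" by (simp add: d2L_def)

lemma sum_deriv:
  assumes "\<forall>(h,a,b)\<in>set L. smooth1 h"
  shows "((\<lambda>c. \<Sum>t\<leftarrow>L. tm t c) has_derivative (\<lambda>q. fst q * (\<Sum>t\<leftarrow>d1L L. tm t x) + snd q * (\<Sum>t\<leftarrow>d2L L. tm t x))) (at x)"
  using assms
proof (induction L)
  case Nil
  then show ?case by (simp add: d1L_def d2L_def)
next
  case (Cons t L)
  obtain h a b where t: "t = (h,a,b)" by (cases t) auto
  have "smooth1 h" using Cons.prems t by auto
  from has_derivative_add[OF tm_deriv[OF this, of a b x] Cons.IH] Cons.prems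
  show ?case
    apply (subst d1L_cons) apply (subst d2L_cons)
    by (auto simp: t algebra_simps)
qed

lemma smooth1_d1L: "\<forall>(h,a,b)\<in>set L. smooth1 h \<Longrightarrow> \<forall>(h,a,b)\<in>set (d1L L). smooth1 h"
  by (auto simp: d1L_def dr intro!: smooth1_mult smooth1_const)
lemma smooth1_d2L: "\<forall>(h,a,b)\<in>set L. smooth1 h \<Longrightarrow> \<forall>(h,a,b)\<in>set (d2L L). smooth1 h"
  by (auto simp: d2L_def dr intro!: smooth1_mult smooth1_const)

lemma smooth_on2_tm:
  assumes "\<forall>(h,a,b)\<in>set L. smooth1 h"
  shows "smooth_on2 S (\<lambda>c. \<Sum>t\<leftarrow>L. tm t c)"
proof -
  let ?X = "{f. \<exists>L. (\<forall>(h,a,b)\<in>set L. smooth1 h) \<and> f = (\<lambda>c. \<Sum>t\<leftarrow>L. tm t c)}"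
  have "f \<in> ?X \<Longrightarrow> smooth_on2 S f" for f
  proof (coinduction arbitrary: f rule: smooth_on2.coinduct)
    case (smooth_on2 f)
    then obtain L where L: "\<forall>(h,a,b)\<in>set L. smooth1 h" "f = (\<lambda>c. \<Sum>t\<leftarrow>L. tm t c)" by auto
    have "(\<lambda>c. \<Sum>t\<leftarrow>d1L L. tm t c) \<in> ?X" using smooth1_d1L[OF L(1)] by blast
    moreover have "(\<lambda>c. \<Sum>t\<leftarrow>d2L L. tm t c) \<in> ?X" using smooth1_d2L[OF L(1)] by blast
    moreover have "\<forall>x. (f has_derivative (\<lambda>q. fst q * (\<Sum>t\<leftarrow>d1L L. tm t x) + snd q * (\<Sum>t\<leftarrow>d2L L. tm t x))) (at x)"
      using sum_deriv[OF L(1)] L(2) by simp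
    ultimately show ?case
      by (intro exI[of _ f] exI[of _ "\<lambda>c. \<Sum>t\<leftarrow>d1L L. tm t c"] exI[of _ "\<lambda>c. \<Sum>t\<leftarrow>d2L L. tm t c"]) blast
  qed
  then show ?thesis using assms by blast
qed

lemma smooth_on2_comp_p:
  assumes "smooth1 h" shows "smooth_on2 S (\<lambda>c. h (fst c * (snd c)\<^sup>2))"
  using smooth_on2_tm[of "[(h,0,0)]" S] assms by (simp add: tm_def)




lemma local_right_le:
  fixes g :: "real \<Rightarrow> real"
  assumes T: "0 \<le> s" "s < T"
    and d: "(g has_real_derivative g') (at s within {0..<T})"
    and le: "g s \<le> m" and neg: "g s = m \<Longrightarrow> g' < 0"
  shows "\<exists>\<delta>>0. \<forall>u. s < u \<and> u < s + \<delta> \<longrightarrow> g u \<le> m"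
proof (cases "g s = m")
  case True
  from has_real_derivative_neg_dec_right[OF d neg[OF True]] obtain d where
    d0: "d > 0" and dd: "\<forall>h>0. s + h \<in> {0..<T} \<longrightarrow> h < d \<longrightarrow> g s > g (s + h)" by blast
  show ?thesis
  proof (intro exI[of _ "min d (T - s)"] conjI allI impI)
    show "0 < min d (T - s)" using d0 T by simp
    fix u assume u: "s < u \<and> u < s + min d (T - s)"
    then have "g s > g (s + (u - s))" using dd[rule_format, of "u - s"] T by auto
    then show "g u \<le> m" using True by simp
  qed
next
  case False
  then have lt: "g s < m" using le by simp
  have "continuous (at s within {0..<T}) g"
    using d by (rule DERIV_continuous)
  then obtain d where d0: "d > 0" and dd: "\<forall>x'\<in>{0..<T}. dist x' s < d \<longrightarrow> dist (g x') (g s) < m - g s"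
    unfolding continuous_within_eps_delta using lt by (meson diff_gt_0_iff_gt)
  show ?thesis
  proof (intro exI[of _ "min d (T - s)"] conjI allI impI)
    show "0 < min d (T - s)" using d0 T by simp
    fix u assume u: "s < u \<and> u < s + min d (T - s)"
    then have "dist (g u) (g s) < m - g s" using dd[rule_format, of u] T by (auto simp: dist_real_def)
    then show "g u \<le> m" by (auto simp: dist_real_def)
  qed
qed

lemma max3_noninc_eps:
  fixes g1 g2 g3 g1' g2' g3' :: "real \<Rightarrow> real"
  assumes d1: "\<And>t. t \<in> {0..<T} \<Longrightarrow> (g1 has_real_derivative g1' t) (at t within {0..<T})"
    and d2: "\<And>t. t \<in> {0..<T} \<Longrightarrow> (g2 has_real_derivative g2' t) (at t within {0..<T})"
    and d3: "\<And>t. t \<in> {0..<T} \<Longrightarrow> (g3 has_real_derivative g3' t) (at t within {0..<T})"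
    and a1: "\<And>t. t \<in> {0..<T} \<Longrightarrow> g1 t = max (g1 t) (max (g2 t) (g3 t)) \<Longrightarrow> g1' t < 0"
    and a2: "\<And>t. t \<in> {0..<T} \<Longrightarrow> g2 t = max (g1 t) (max (g2 t) (g3 t)) \<Longrightarrow> g2' t < 0"
    and a3: "\<And>t. t \<in> {0..<T} \<Longrightarrow> g3 t = max (g1 t) (max (g2 t) (g3 t)) \<Longrightarrow> g3' t < 0"
    and t1: "t1 \<in> {0..<T}"
  shows "max (g1 t1) (max (g2 t1) (g3 t1)) \<le> max (g1 0) (max (g2 0) (g3 0))"
proof (rule ccontr)
  define M where "M t = max (g1 t) (max (g2 t) (g3 t))" for t
  assume "\<not> ?thesis"
  then have bad: "M t1 > M 0" unfolding M_def by (meson not_le)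
  define S where "S = {t \<in> {0..t1}. \<forall>u\<in>{0..t}. M u \<le> M 0}"
  define s where "s = Sup S"
  have T0: "0 < T" using t1 by auto
  have c: "continuous_on {0..<T} M"
  proof -
    have "continuous_on {0..<T} g1" "continuous_on {0..<T} g2" "continuous_on {0..<T} g3"
      using d1 d2 d3 by (meson DERIV_continuous continuous_on_eq_continuous_within)+
    then show ?thesis unfolding M_def by (intro continuous_on_max)
  qed
  have "0 \<in> S" by (auto simp: S_def t1[simplified])
  have bdd: "bdd_above S" by (auto simp: S_def bdd_above_def)
  have s0: "0 \<le> s" using \<open>0 \<in> S\<close> bdd unfolding s_def by (meson cSup_upper)
  have st1: "s \<le> t1" unfolding s_def using \<open>0 \<in> S\<close> by (intro cSup_least) (auto simp: S_def)
  have below: "M u \<le> M 0" if "0 \<le> u" "u < s" for u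
  proof -
    from less_cSupD[of S u] that \<open>0 \<in> S\<close> obtain t where "t \<in> S" "u < t" unfolding s_def by blast
    then show ?thesis using that by (auto simp: S_def)
  qed
  have Ms: "M s \<le> M 0"
  proof (cases "s = 0")
    case True then show ?thesis by simp
  next
    case False
    then have sp: "s > 0" using s0 by simp
    have sT: "s \<in> {0..<T}" using s0 st1 t1 by auto
    have "(M \<longlongrightarrow> M s) (at s within {0..<T})"
      using c sT by (simp add: continuous_on_def)
    then have "(M \<longlongrightarrow> M s) (at s within {0..s})"
      by (rule tendsto_within_subset) (use sT in auto)
    then have "(M \<longlongrightarrow> M s) (at_left s)"
      using at_within_Icc_at_left[of 0 s] sp by simp
    moreover have "eventually (\<lambda>u. M u \<le> M 0) (at_left s)"
      using eventually_at_left_real[of 0 s] sp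
      by (auto elim!: eventually_mono intro: below)
    ultimately show ?thesis
      by (rule tendsto_upperbound) (simp add: trivial_limit_at_left_real)
  qed
  have sS: "\<forall>u\<in>{0..s}. M u \<le> M 0"
  proof
    fix u assume "u \<in> {0..s}"
    then consider "u = s" | "0 \<le> u \<and> u < s" by fastforce
    then show "M u \<le> M 0" using below Ms by cases auto
  qed
  have "s \<noteq> t1"
  proof
    assume "s = t1"
    then have "M t1 \<le> M 0" using sS s0 by auto
    then show False using bad by simp
  qed
  then have slt: "s < t1" using st1 by simp
  then have sT: "s < T" using t1 by auto
  have "\<exists>\<delta>>0. \<forall>u. s < u \<and> u < s + \<delta> \<longrightarrow> g1 u \<le> M s"
    by (rule local_right_le[OF s0 sT d1]) (use s0 sT a1 in \<open>auto simp: M_def\<close>)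
  then obtain e1 where e1: "e1 > 0" "\<forall>u. s < u \<and> u < s + e1 \<longrightarrow> g1 u \<le> M s" by blast
  have "\<exists>\<delta>>0. \<forall>u. s < u \<and> u < s + \<delta> \<longrightarrow> g2 u \<le> M s"
    by (rule local_right_le[OF s0 sT d2]) (use s0 sT a2 in \<open>auto simp: M_def\<close>)
  then obtain e2 where e2: "e2 > 0" "\<forall>u. s < u \<and> u < s + e2 \<longrightarrow> g2 u \<le> M s" by blast
  have "\<exists>\<delta>>0. \<forall>u. s < u \<and> u < s + \<delta> \<longrightarrow> g3 u \<le> M s"
    by (rule local_right_le[OF s0 sT d3]) (use s0 sT a3 in \<open>auto simp: M_def\<close>)
  then obtain e3 where e3: "e3 > 0" "\<forall>u. s < u \<and> u < s + e3 \<longrightarrow> g3 u \<le> M s" by blast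
  define e where "e = min (min e1 e2) (min e3 (t1 - s))"
  have e0: "e > 0" using e1 e2 e3 slt by (simp add: e_def)
  have "s + e / 2 \<in> S"
    unfolding S_def
  proof (intro CollectI conjI ballI)
    have "e \<le> t1 - s" by (simp add: e_def)
    then show "s + e / 2 \<in> {0..t1}" using e0 s0 by auto
    fix u assume u: "u \<in> {0..s + e / 2}"
    show "M u \<le> M 0"
    proof (cases "u \<le> s")
      case True then show ?thesis using sS u by auto
    next
      case False
      have "e \<le> e1" "e \<le> e2" "e \<le> e3" by (auto simp: e_def)
      then have "s < u \<and> u < s + e1" "s < u \<and> u < s + e2" "s < u \<and> u < s + e3"
        using u e0 False by auto
      then have "M u \<le> M s" using e1 e2 e3 by (auto simp: M_def)
      then show ?thesis using Ms by simp
    qed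
  qed
  then have "s + e / 2 \<le> s" unfolding s_def using bdd by (rule cSup_upper)
  then show False using e0 by simp
qed

lemma max3_noninc:
  fixes f1 f2 f3 f1' f2' f3' :: "real \<Rightarrow> real"
  assumes d1: "\<And>t. t \<in> {0..<T} \<Longrightarrow> (f1 has_real_derivative f1' t) (at t within {0..<T})"
    and d2: "\<And>t. t \<in> {0..<T} \<Longrightarrow> (f2 has_real_derivative f2' t) (at t within {0..<T})"
    and d3: "\<And>t. t \<in> {0..<T} \<Longrightarrow> (f3 has_real_derivative f3' t) (at t within {0..<T})"
    and a1: "\<And>t. t \<in> {0..<T} \<Longrightarrow> f1 t = max (f1 t) (max (f2 t) (f3 t)) \<Longrightarrow> f1' t \<le> 0"
    and a2: "\<And>t. t \<in> {0..<T} \<Longrightarrow> f2 t = max (f1 t) (max (f2 t) (f3 t)) \<Longrightarrow> f2' t \<le> 0"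
    and a3: "\<And>t. t \<in> {0..<T} \<Longrightarrow> f3 t = max (f1 t) (max (f2 t) (f3 t)) \<Longrightarrow> f3' t \<le> 0"
    and t1: "t1 \<in> {0..<T}"
  shows "max (f1 t1) (max (f2 t1) (f3 t1)) \<le> max (f1 0) (max (f2 0) (f3 0))"
proof -
  have key: "max (f1 t1) (max (f2 t1) (f3 t1)) - e * t1 \<le> max (f1 0) (max (f2 0) (f3 0))" if e: "e > 0" for e
  proof -
    have sh: "max (x - e * t) (max (y - e * t) (z - e * t)) = max x (max y z) - e * t" for x y z t :: real
      by (simp add: max_diff_distrib_left)
    have D1: "\<And>t. t \<in> {0..<T} \<Longrightarrow> ((\<lambda>t. f1 t - e * t) has_real_derivative f1' t - e) (at t within {0..<T})"
      using d1 by (auto intro!: derivative_eq_intros)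
    have D2: "\<And>t. t \<in> {0..<T} \<Longrightarrow> ((\<lambda>t. f2 t - e * t) has_real_derivative f2' t - e) (at t within {0..<T})"
      using d2 by (auto intro!: derivative_eq_intros)
    have D3: "\<And>t. t \<in> {0..<T} \<Longrightarrow> ((\<lambda>t. f3 t - e * t) has_real_derivative f3' t - e) (at t within {0..<T})"
      using d3 by (auto intro!: derivative_eq_intros)
    have "max (f1 t1 - e * t1) (max (f2 t1 - e * t1) (f3 t1 - e * t1)) \<le>
          max (f1 0 - e * 0) (max (f2 0 - e * 0) (f3 0 - e * 0))"
    proof (rule max3_noninc_eps[OF D1 D2 D3 _ _ _ t1])
      fix t assume "t \<in> {0..<T}"
      then show "f1 t - e * t = max (f1 t - e * t) (max (f2 t - e * t) (f3 t - e * t)) \<Longrightarrow> f1' t - e < 0"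
        using a1[of t] e by (simp add: sh)
      show "f2 t - e * t = max (f1 t - e * t) (max (f2 t - e * t) (f3 t - e * t)) \<Longrightarrow> f2' t - e < 0"
        using a2[of t] e \<open>t \<in> {0..<T}\<close> by (simp add: sh)
      show "f3 t - e * t = max (f1 t - e * t) (max (f2 t - e * t) (f3 t - e * t)) \<Longrightarrow> f3' t - e < 0"
        using a3[of t] e \<open>t \<in> {0..<T}\<close> by (simp add: sh)
    qed
    then show ?thesis by (simp add: sh)
  qed
  show ?thesis
  proof (rule field_le_epsilon)
    fix e :: real assume "e > 0"
    then have "e / (t1 + 1) > 0" using t1 by auto
    from key[OF this] have "max (f1 t1) (max (f2 t1) (f3 t1)) \<le> max (f1 0) (max (f2 0) (f3 0)) + e / (t1 + 1) * t1" by linarith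
    also have "e / (t1 + 1) * t1 \<le> e" using \<open>e > 0\<close> t1 by (simp add: field_simps)
    finally show "max (f1 t1) (max (f2 t1) (f3 t1)) \<le> max (f1 0) (max (f2 0) (f3 0)) + e" by simp
  qed
qed




locale sys =
  fixes \<theta> \<mu> Dmax :: real
  assumes th: "\<theta> > 0" and mu: "\<mu> > 0" and Dm: "Dmax > (1 + \<mu>)\<^sup>2"
begin

definition "aa = 1 + \<mu>"
definition "dl = (Dmax - aa\<^sup>2) / 2"
definition "P0 = aa\<^sup>2 + dl"
definition "ep = min 1 (aa * dl / (3 * aa\<^sup>2 + 3 * aa + 1))"
definition "KK = (aa\<^sup>2 / dl + 1) / P0 + (ep + \<mu>) / ep\<^sup>2 + 1"
definition "AA = exp (1 / dl) / Dmax"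
definition "phi y = y * exp (- (AA * y * sb (y - P0)))"
definition "kk c = phi (fst c * (snd c)\<^sup>2)"

lemma aa1: "aa > 1" using mu by (simp add: aa_def)
lemma dl0: "dl > 0" using Dm by (simp add: dl_def aa_def)
lemma P0gt: "P0 > aa\<^sup>2" using dl0 by (simp add: P0_def)
lemma DmP0: "Dmax = P0 + dl" by (simp add: P0_def dl_def)
lemma P0gt1: "P0 > 1"
proof -
  have "1 < aa * aa" using aa1 less_1_mult by blast
  then show ?thesis using P0gt by (simp add: power2_eq_square)
qed
lemma ep0: "ep > 0" using aa1 dl0 unfolding ep_def by (auto intro!: divide_pos_pos add_pos_pos)
lemma ep1: "ep \<le> 1" by (simp add: ep_def)
lemma ep_cube: "(aa + ep) ^ 3 \<le> aa * P0"
proof -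
  have e2: "ep * (3 * aa\<^sup>2 + 3 * aa + 1) \<le> aa * dl"
  proof -
    have pos: "3 * aa\<^sup>2 + 3 * aa + 1 > 0" using aa1 by (simp add: add_pos_pos)
    have "ep \<le> aa * dl / (3 * aa\<^sup>2 + 3 * aa + 1)" by (simp add: ep_def)
    then show ?thesis using pos by (simp add: field_simps)
  qed
  have "(aa + ep) ^ 3 = aa^3 + 3*aa\<^sup>2*ep + 3*aa*ep\<^sup>2 + ep^3" by (simp add: power2_eq_square power3_eq_cube algebra_simps)
  also have "\<dots> \<le> aa^3 + ep * (3 * aa\<^sup>2 + 3 * aa + 1)"
  proof -
    have "ep\<^sup>2 \<le> ep" "ep^3 \<le> ep" using ep0 ep1 by (simp_all add: power2_eq_square power3_eq_cube mult_le_one)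
    then show ?thesis using aa1 by (simp add: algebra_simps) (smt (verit) mult_left_mono)
  qed
  also have "\<dots> \<le> aa * P0" using e2 by (simp add: P0_def power2_eq_square power3_eq_cube algebra_simps)
  finally show ?thesis .
qed

lemma KK_pos: "KK > 0"
proof -
  have "aa\<^sup>2 / dl \<ge> 0" using dl0 by simp
  then have "aa\<^sup>2 / dl + 1 > 0" by linarith
  then show ?thesis using P0gt1 ep0 mu unfolding KK_def by (intro add_pos_pos) auto
qed

lemma KK1: "P0 * KK \<ge> aa\<^sup>2 / dl + 1"
proof -
  have "P0 * KK = aa\<^sup>2 / dl + 1 + P0 * ((ep + \<mu>) / ep\<^sup>2 + 1)"
    using P0gt1 by (simp add: KK_def field_simps)
  moreover have "P0 * ((ep + \<mu>) / ep\<^sup>2 + 1) \<ge> 0" using P0gt1 ep0 mu by simp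
  ultimately show ?thesis by simp
qed

lemma KK2: "KK > (ep + \<mu>) / ep\<^sup>2"
  using dl0 P0gt1 aa1 unfolding KK_def by (simp add: add_pos_pos)

lemma Zbound: assumes "z > 0" shows "z\<^sup>2 \<le> P0 * (1 + KK * (z - aa)\<^sup>2)"
proof (cases "z \<le> aa")
  case True
  then have "z\<^sup>2 \<le> aa\<^sup>2" using assms by (simp add: power_mono)
  moreover have "P0 * (KK * (z - aa)\<^sup>2) \<ge> 0" using P0gt1 KK_pos by simp
  ultimately show ?thesis using P0gt by (simp add: algebra_simps)
next
  case False
  define t where "t = z - aa"
  have t0: "t > 0" using False by (simp add: t_def)
  have z: "z = aa + t" by (simp add: t_def)
  have "2 * aa * t \<le> dl + aa\<^sup>2 * t\<^sup>2 / dl"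
  proof -
    have "0 \<le> (dl - aa * t)\<^sup>2" by simp
    then have "2 * aa * t * dl \<le> dl\<^sup>2 + aa\<^sup>2 * t\<^sup>2" by (simp add: power2_eq_square algebra_simps)
    then show ?thesis using dl0 by (simp add: field_simps power2_eq_square)
  qed
  then have "z\<^sup>2 \<le> aa\<^sup>2 + dl + (aa\<^sup>2 / dl + 1) * t\<^sup>2" unfolding z by (simp add: power2_eq_square algebra_simps)
  also have "\<dots> \<le> P0 + P0 * KK * t\<^sup>2" using KK1 by (simp add: P0_def mult_right_mono)
  finally show ?thesis by (simp add: t_def algebra_simps)
qed

lemma Tbound: assumes "t \<ge> ep" shows "KK * t\<^sup>2 > \<mu> + t"
proof -
  have t0: "t > 0" using assms ep0 by simp
  have "KK * ep > (ep + \<mu>) / ep" using KK2 ep0 by (simp add: field_simps power2_eq_square)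
  then have "KK * ep - 1 > \<mu> / ep" using ep0 by (simp add: field_simps)
  then have "(KK * ep - 1) * t > \<mu> / ep * t" by (rule mult_strict_right_mono[OF _ t0])
  moreover have "\<mu> / ep * t \<ge> \<mu>" using assms ep0 mu by (simp add: field_simps)
  moreover have "KK * t\<^sup>2 \<ge> KK * ep * t" using assms KK_pos t0 by (simp add: power2_eq_square)
  ultimately show ?thesis by (simp add: algebra_simps)
qed

lemma Dmax_pos: "Dmax > 0" using Dm by (smt (verit) zero_le_power2)
lemma AA_pos: "AA > 0" using Dmax_pos by (simp add: AA_def)

lemma sb_nonneg: "sb x \<ge> 0" by (simp add: sb_def)
lemma sb_le1: "sb x \<le> 1" by (simp add: sb_def)

lemma phi_eq: "y \<le> P0 \<Longrightarrow> phi y = y" by (simp add: phi_def sb_def)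
lemma phi_pos: "y > 0 \<Longrightarrow> phi y > 0" by (simp add: phi_def)
lemma phi_le: "y > 0 \<Longrightarrow> phi y \<le> y"
proof -
  assume y: "y > 0"
  have "AA * y * sb (y - P0) \<ge> 0" using AA_pos y sb_nonneg by simp
  then have "exp (- (AA * y * sb (y - P0))) \<le> 1" by simp
  then show ?thesis using y unfolding phi_def by (simp add: mult_left_le)
qed
lemma phi1: "phi 1 = 1" using P0gt1 by (simp add: phi_eq)

lemma phi_Dmax: assumes y: "y > 0" shows "phi y \<le> Dmax"
proof (cases "y \<le> Dmax")
  case True then show ?thesis using phi_le[OF y] by simp
next
  case False
  then have yP: "y - P0 > dl" using DmP0 by simp
  have "sb (y - P0) \<ge> exp (- 1 / dl)"
    using yP dl0 by (simp add: sb_def field_simps)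
  then have "AA * y * sb (y - P0) \<ge> AA * y * exp (- 1 / dl)"
    using AA_pos y by (simp add: mult_left_mono)
  also have "AA * y * exp (- 1 / dl) = y / Dmax"
    unfolding AA_def using Dmax_pos by (simp add: exp_minus field_simps)
  finally have "exp (- (AA * y * sb (y - P0))) \<le> exp (- (y / Dmax))" by simp
  then have "phi y \<le> y * exp (- (y / Dmax))" unfolding phi_def using y by (simp add: mult_left_mono)
  also have "\<dots> \<le> Dmax"
  proof -
    have Dp: "Dmax > 0" using Dm by (smt (verit) zero_le_power2)
    have "y / Dmax \<le> exp (y / Dmax)" using exp_ge_add_one_self[of "y / Dmax"] by linarith
    then have "y / Dmax / exp (y / Dmax) \<le> 1" by (subst divide_le_eq_1_pos) auto
    then have "y / Dmax * exp (- (y / Dmax)) \<le> 1"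
      by (simp add: exp_minus divide_inverse)
    then have "Dmax * (y / Dmax * exp (- (y / Dmax))) \<le> Dmax" using Dp by (simp add: mult_left_le)
    then show ?thesis using Dp by simp
  qed
  finally show ?thesis .
qed

lemma phi_lower: assumes "exp (- 3 * S) \<le> y" "y \<le> exp (3 * S)"
  shows "phi y \<ge> exp (- 3 * S) * exp (- (AA * exp (3 * S)))"
proof -
  have y: "y > 0" using assms(1) by (smt (verit) exp_gt_zero)
  have "AA * y * sb (y - P0) \<le> AA * exp (3 * S) * 1"
    using AA_pos y assms(2) sb_le1 sb_nonneg by (intro mult_mono) auto
  then have "exp (- (AA * y * sb (y - P0))) \<ge> exp (- (AA * exp (3 * S)))" by simp
  then show ?thesis unfolding phi_def using assms(1) y by (intro mult_mono) auto
qed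

definition "W3 c1 c2 = (KK * (\<mu> * c1 + c2 - aa)\<^sup>2)\<^sup>2"

lemma sq_ge_abs: "x\<^sup>2 \<ge> y\<^sup>2 \<Longrightarrow> 0 \<le> y \<Longrightarrow> \<bar>x\<bar> \<ge> y" for x y :: real
  by (metis abs_le_square_iff abs_of_nonneg)

lemma R1: assumes c: "c1 > 0" "c2 > 0" "c1 < 1" and w: "(ln c1)\<^sup>2 \<ge> W3 c1 c2"
  shows "c1 * c2\<^sup>2 \<le> P0"
proof -
  define z where "z = \<mu> * c1 + c2"
  have "\<mu> * c1 > 0" using c mu by simp
  then have z0: "z > 0" "c2 < z" using c by (auto simp: z_def)
  have "\<bar>ln c1\<bar> \<ge> KK * (z - aa)\<^sup>2" using w KK_pos unfolding W3_def z_def by (intro sq_ge_abs) auto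
  moreover have "\<bar>ln c1\<bar> = - ln c1" using c by simp
  ultimately have "ln c1 \<le> - (KK * (z - aa)\<^sup>2)" by simp
  then have c1le: "c1 \<le> exp (- (KK * (z - aa)\<^sup>2))" using c by (metis exp_le_cancel_iff exp_ln)
  have "c1 * c2\<^sup>2 \<le> c1 * z\<^sup>2" using c z0 by (intro mult_left_mono power_mono) auto
  also have "\<dots> \<le> exp (- (KK * (z - aa)\<^sup>2)) * z\<^sup>2" using c1le by (simp add: mult_right_mono)
  also have "\<dots> \<le> P0"
  proof -
    have "z\<^sup>2 \<le> P0 * (1 + KK * (z - aa)\<^sup>2)" by (rule Zbound[OF z0(1)])
    also have "\<dots> \<le> P0 * exp (KK * (z - aa)\<^sup>2)" using P0gt1 by (simp add: exp_ge_add_one_self add.commute)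
    finally show ?thesis by (simp add: exp_minus field_simps)
  qed
  finally show ?thesis .
qed

lemma R2: assumes c: "c1 > 0" "c2 > 1" and w: "(ln c2)\<^sup>2 \<ge> (ln c1)\<^sup>2" "(ln c2)\<^sup>2 \<ge> W3 c1 c2"
  shows "c1 * c2\<^sup>2 \<le> P0"
proof -
  define z where "z = \<mu> * c1 + c2"
  have "\<mu> * c1 > 0" using c mu by simp
  then have z0: "z > 0" "c2 < z" using c by (auto simp: z_def)
  have l2: "ln c2 > 0" using c by simp
  have "\<bar>ln c2\<bar> \<ge> \<bar>ln c1\<bar>" using w(1) by (simp add: abs_le_square_iff)
  then have "ln c1 \<le> ln c2" using l2 by linarith
  then have c12: "c1 \<le> c2" using c by simp
  have "\<bar>ln c2\<bar> \<ge> KK * (z - aa)\<^sup>2" using w(2) KK_pos unfolding W3_def z_def by (intro sq_ge_abs) auto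
  then have "KK * (z - aa)\<^sup>2 \<le> ln c2" using l2 by simp
  also have "\<dots> < ln z" using z0 c by simp
  also have "\<dots> \<le> z - 1" using z0(1) by (rule ln_le_minus_one)
  finally have kz: "KK * (z - aa)\<^sup>2 < \<mu> + (z - aa)" by (simp add: aa_def)
  have zl: "z < aa + ep"
  proof (rule ccontr)
    assume "\<not> z < aa + ep"
    then have "z - aa \<ge> ep" by simp
    from Tbound[OF this] kz show False by simp
  qed
  have cube: "(aa + ep) ^ 3 / aa \<le> P0" using ep_cube aa1 by (simp add: field_simps)
  show ?thesis
  proof (cases "c1 \<le> 1")
    case True
    have "c1 * c2\<^sup>2 \<le> 1 * z\<^sup>2" using c z0 True by (intro mult_mono power_mono) auto
    also have "\<dots> \<le> (aa + ep)\<^sup>2" using zl z0 by (simp add: power_mono)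
    also have "\<dots> \<le> (aa + ep) ^ 3 / aa"
    proof -
      have "aa * (aa + ep)\<^sup>2 \<le> (aa + ep) * (aa + ep)\<^sup>2" using ep0 aa1 by (intro mult_right_mono) auto
      then show ?thesis using aa1 by (simp add: field_simps power2_eq_square power3_eq_cube)
    qed
    finally show ?thesis using cube by simp
  next
    case False
    have "aa * c1 \<le> z" using c12 by (simp add: aa_def z_def algebra_simps)
    then have c1z: "c1 \<le> z / aa" using aa1 by (simp add: field_simps)
    have "c1 * c2\<^sup>2 \<le> (z / aa) * z\<^sup>2" using c z0 c1z by (intro mult_mono power_mono) auto
    also have "\<dots> = z ^ 3 / aa" by (simp add: power2_eq_square power3_eq_cube)
    also have "\<dots> \<le> (aa + ep) ^ 3 / aa" using zl z0 aa1 by (intro divide_right_mono power_mono) auto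
    finally show ?thesis using cube by simp
  qed
qed

definition "DD c1 c2 = phi (c1 * c2\<^sup>2)"
definition "F1 c1 c2 = DD c1 c2 * (1 + \<theta> - c1) - \<theta> * c1 * c2\<^sup>2"
definition "F2 c1 c2 = DD c1 c2 * (1 - \<mu> * \<theta> - c2) + \<mu> * \<theta> * c1 * c2\<^sup>2"

lemma F12: "\<mu> * F1 c1 c2 + F2 c1 c2 = DD c1 c2 * (aa - (\<mu> * c1 + c2))"
  by (simp add: F1_def F2_def aa_def algebra_simps)

lemma DD_pos: "c1 > 0 \<Longrightarrow> c2 > 0 \<Longrightarrow> DD c1 c2 > 0" by (simp add: DD_def phi_pos)
lemma DD_le: "c1 > 0 \<Longrightarrow> c2 > 0 \<Longrightarrow> DD c1 c2 \<le> c1 * c2\<^sup>2" by (simp add: DD_def phi_le)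

lemma B1: assumes c: "c1 > 0" "c2 > 0" and w: "(ln c1)\<^sup>2 \<ge> (ln c2)\<^sup>2" "(ln c1)\<^sup>2 \<ge> W3 c1 c2"
  shows "2 * ln c1 * (F1 c1 c2 / c1) \<le> - 2 * DD c1 c2 * exp (- \<bar>ln c1\<bar>) * (ln c1)\<^sup>2"
proof (cases "c1 \<ge> 1")
  case True
  define x where "x = ln c1"
  define D where "D = DD c1 c2"
  have x0: "x \<ge> 0" using True by (simp add: x_def)
  have D0: "D > 0" "D \<le> c1 * c2\<^sup>2" using DD_pos[OF c] DD_le[OF c] by (simp_all add: D_def)
  have "F1 c1 c2 \<le> D * (1 - c1)"
  proof -
    have "\<theta> * D \<le> \<theta> * (c1 * c2\<^sup>2)" using D0 th by simp
    then show ?thesis unfolding F1_def D_def[symmetric] by (simp add: algebra_simps)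
  qed
  then have "2 * x * (F1 c1 c2 / c1) \<le> 2 * x * (D * (1 - c1) / c1)"
    using x0 c by (intro mult_left_mono divide_right_mono) auto
  also have "D * (1 - c1) / c1 \<le> D * (- x) / c1"
  proof -
    have "x \<le> c1 - 1" unfolding x_def using c(1) by (rule ln_le_minus_one)
    then show ?thesis using D0 c by (intro divide_right_mono mult_left_mono) auto
  qed
  then have "2 * x * (D * (1 - c1) / c1) \<le> 2 * x * (D * (- x) / c1)" using x0 by (intro mult_left_mono) auto
  also have "2 * x * (D * (- x) / c1) = - 2 * D * exp (- \<bar>x\<bar>) * x\<^sup>2"
    using c x0 by (simp add: x_def exp_minus power2_eq_square field_simps)
  finally show ?thesis by (simp add: x_def D_def)
next
  case False
  define x where "x = ln c1"
  have x0: "x < 0" using False c by (simp add: x_def)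
  have p: "c1 * c2\<^sup>2 \<le> P0" using R1[OF c] False w by simp
  then have D: "DD c1 c2 = c1 * c2\<^sup>2" by (simp add: DD_def phi_eq)
  define p where "p = c1 * c2\<^sup>2"
  have p0: "p > 0" using c by (simp add: p_def)
  have F: "F1 c1 c2 = p * (1 - c1)" unfolding F1_def D p_def by (simp add: algebra_simps)
  have "F1 c1 c2 / c1 = p * (1 / c1 - 1)" unfolding F using c by (simp add: field_simps)
  then have "2 * x * (F1 c1 c2 / c1) = 2 * x * p * (1 / c1 - 1)" by simp
  also have "\<dots> \<le> 2 * x * p * (- x)"
  proof -
    have "ln (1 / c1) \<le> 1 / c1 - 1" using c by (intro ln_le_minus_one) auto
    then have "- x \<le> 1 / c1 - 1" using c by (simp add: x_def ln_div)
    moreover have "2 * x * p \<le> 0" using x0 p0 by (simp add: mult_nonpos_nonneg)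
    ultimately show ?thesis by (rule mult_left_mono_neg)
  qed
  also have "\<dots> \<le> - 2 * p * exp (- \<bar>x\<bar>) * x\<^sup>2"
  proof -
    have "exp (- \<bar>x\<bar>) * x\<^sup>2 \<le> x\<^sup>2" by (rule mult_left_le_one_le) auto
    then have "p * exp (- \<bar>x\<bar>) * x\<^sup>2 \<le> p * x\<^sup>2" using p0 by (simp add: mult_left_mono mult.assoc)
    then show ?thesis by (simp add: power2_eq_square algebra_simps)
  qed
  finally show ?thesis by (simp add: x_def D p_def)
qed

lemma B2: assumes c: "c1 > 0" "c2 > 0" and w: "(ln c2)\<^sup>2 \<ge> (ln c1)\<^sup>2" "(ln c2)\<^sup>2 \<ge> W3 c1 c2"
  shows "2 * ln c2 * (F2 c1 c2 / c2) \<le> - 2 * DD c1 c2 * exp (- \<bar>ln c2\<bar>) * (ln c2)\<^sup>2"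
proof (cases "c2 \<le> 1")
  case True
  define x where "x = ln c2"
  define D where "D = DD c1 c2"
  have x0: "x \<le> 0" using True c by (simp add: x_def)
  have D0: "D > 0" "D \<le> c1 * c2\<^sup>2" using DD_pos[OF c] DD_le[OF c] by (simp_all add: D_def)
  have "F2 c1 c2 \<ge> D * (1 - c2)"
  proof -
    have "\<mu> * \<theta> * D \<le> \<mu> * \<theta> * (c1 * c2\<^sup>2)" using D0 th mu by simp
    then show ?thesis unfolding F2_def D_def[symmetric] by (simp add: algebra_simps)
  qed
  then have "2 * x * (F2 c1 c2 / c2) \<le> 2 * x * (D * (1 - c2) / c2)"
    using x0 c by (intro mult_left_mono_neg divide_right_mono) auto
  also have "\<dots> \<le> 2 * x * (D * (- x))"
  proof -
    have "ln (1 / c2) \<le> 1 / c2 - 1" using c by (intro ln_le_minus_one) auto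
    then have "- x \<le> 1 / c2 - 1" using c by (simp add: x_def ln_div)
    then have "D * (- x) \<le> D * (1 / c2 - 1)" using D0 by (intro mult_left_mono) auto
    also have "D * (1 / c2 - 1) = D * (1 - c2) / c2" using c by (simp add: field_simps)
    finally have "D * (- x) \<le> D * (1 - c2) / c2" .
    then show ?thesis using x0 by (intro mult_left_mono_neg) auto
  qed
  also have "\<dots> \<le> - 2 * D * exp (- \<bar>x\<bar>) * x\<^sup>2"
  proof -
    have "exp (- \<bar>x\<bar>) * x\<^sup>2 \<le> x\<^sup>2" by (rule mult_left_le_one_le) auto
    then have "D * exp (- \<bar>x\<bar>) * x\<^sup>2 \<le> D * x\<^sup>2" using D0 by (simp add: mult_left_mono mult.assoc)
    then show ?thesis by (simp add: power2_eq_square algebra_simps)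
  qed
  finally show ?thesis by (simp add: x_def D_def)
next
  case False
  define x where "x = ln c2"
  have x0: "x > 0" using False c by (simp add: x_def)
  have "c1 * c2\<^sup>2 \<le> P0" using R2[OF c(1)] False w by simp
  then have D: "DD c1 c2 = c1 * c2\<^sup>2" by (simp add: DD_def phi_eq)
  define p where "p = c1 * c2\<^sup>2"
  have p0: "p > 0" using c by (simp add: p_def)
  have "F2 c1 c2 = p * (1 - c2)" unfolding F2_def D p_def by (simp add: algebra_simps)
  then have "2 * x * (F2 c1 c2 / c2) = 2 * x * (p * (1 - c2) / c2)" by simp
  also have "p * (1 - c2) / c2 \<le> p * (- x) / c2"
  proof -
    have "x \<le> c2 - 1" unfolding x_def using c by (intro ln_le_minus_one) auto
    then show ?thesis using p0 c by (intro divide_right_mono mult_left_mono) auto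
  qed
  then have "2 * x * (p * (1 - c2) / c2) \<le> 2 * x * (p * (- x) / c2)" using x0 by (intro mult_left_mono) auto
  also have "2 * x * (p * (- x) / c2) = - 2 * p * exp (- \<bar>x\<bar>) * x\<^sup>2"
    using c x0 by (simp add: x_def exp_minus power2_eq_square field_simps)
  finally show ?thesis by (simp add: x_def D p_def)
qed

lemma vd_fst: "(c has_vector_derivative (a, b)) F \<Longrightarrow> ((\<lambda>t. fst (c t)) has_real_derivative a) F"
  unfolding has_vector_derivative_def has_field_derivative_def
  apply (drule has_derivative_fst) apply (erule has_derivative_eq_rhs) by (auto simp: fun_eq_iff)
lemma vd_snd: "(c has_vector_derivative (a, b)) F \<Longrightarrow> ((\<lambda>t. snd (c t)) has_real_derivative b) F"
  unfolding has_vector_derivative_def has_field_derivative_def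
  apply (drule has_derivative_snd) apply (erule has_derivative_eq_rhs) by (auto simp: fun_eq_iff)

lemma rhs_eq: "rhs \<theta> \<mu> (kk c) c = (F1 (fst c) (snd c), F2 (fst c) (snd c))"
  by (simp add: rhs_def kk_def F1_def F2_def DD_def)

definition "lam S = exp (- 4 * S - AA * exp (3 * S))"

lemma traj_derivs:
  assumes sol: "\<forall>t\<in>{0..<T}. c t \<in> quadrant \<and> (c has_vector_derivative rhs \<theta> \<mu> (kk (c t)) (c t)) (at t within {0..<T})"
    and t: "t \<in> {0..<T}"
  shows "((\<lambda>t. (ln (fst (c t)))\<^sup>2) has_real_derivative 2 * ln (fst (c t)) * (F1 (fst (c t)) (snd (c t)) / fst (c t))) (at t within {0..<T})"
    and "((\<lambda>t. (ln (snd (c t)))\<^sup>2) has_real_derivative 2 * ln (snd (c t)) * (F2 (fst (c t)) (snd (c t)) / snd (c t))) (at t within {0..<T})"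
    and "((\<lambda>t. W3 (fst (c t)) (snd (c t))) has_real_derivative - 4 * DD (fst (c t)) (snd (c t)) * W3 (fst (c t)) (snd (c t))) (at t within {0..<T})"
proof -
  have q: "fst (c t) > 0" "snd (c t) > 0" using sol t by (auto simp: quadrant_def)
  have vd: "(c has_vector_derivative (F1 (fst (c t)) (snd (c t)), F2 (fst (c t)) (snd (c t)))) (at t within {0..<T})"
    using sol t rhs_eq by metis
  note d1 = vd_fst[OF vd] and d2 = vd_snd[OF vd]
  show "((\<lambda>t. (ln (fst (c t)))\<^sup>2) has_real_derivative 2 * ln (fst (c t)) * (F1 (fst (c t)) (snd (c t)) / fst (c t))) (at t within {0..<T})"
    using q by (auto intro!: derivative_eq_intros d1 simp: field_simps)
  show "((\<lambda>t. (ln (snd (c t)))\<^sup>2) has_real_derivative 2 * ln (snd (c t)) * (F2 (fst (c t)) (snd (c t)) / snd (c t))) (at t within {0..<T})"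
    using q by (auto intro!: derivative_eq_intros d2 simp: field_simps)
  have dz: "((\<lambda>t. \<mu> * fst (c t) + snd (c t) - aa) has_real_derivative DD (fst (c t)) (snd (c t)) * (aa - (\<mu> * fst (c t) + snd (c t)))) (at t within {0..<T})"
    using F12[of "fst (c t)" "snd (c t)"] by (auto intro!: derivative_eq_intros d1 d2 simp: mult.commute)
  define g where "g = (\<lambda>t. \<mu> * fst (c t) + snd (c t) - aa)"
  have "((\<lambda>t. (KK * (g t)\<^sup>2)\<^sup>2) has_real_derivative
     2 * (KK * (g t)\<^sup>2) * (KK * (2 * (g t) * (DD (fst (c t)) (snd (c t)) * (aa - (\<mu> * fst (c t) + snd (c t))))))) (at t within {0..<T})"
    using dz unfolding g_def[symmetric] by (auto intro!: derivative_eq_intros)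
  then show "((\<lambda>t. W3 (fst (c t)) (snd (c t))) has_real_derivative - 4 * DD (fst (c t)) (snd (c t)) * W3 (fst (c t)) (snd (c t))) (at t within {0..<T})"
    unfolding W3_def g_def by (simp add: power2_eq_square algebra_simps)
qed

lemma max_scale: "e > 0 \<Longrightarrow> max (a * e) (max (b * e) (c * e)) = max a (max b c) * e" for a b c e :: real
  by (simp add: max_def)

lemma sq_le_abs: "x\<^sup>2 \<le> M \<Longrightarrow> \<bar>x\<bar> \<le> sqrt M"
  by (metis real_sqrt_abs real_sqrt_le_mono)

lemma traj_bound:
  assumes sol: "\<forall>t\<in>{0..<T}. c t \<in> quadrant \<and> (c has_vector_derivative rhs \<theta> \<mu> (kk (c t)) (c t)) (at t within {0..<T})"
    and t: "t \<in> {0..<T}"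
  shows "norm (lnv (c t)) \<le> sqrt 2 * sqrt (max ((ln (fst (c 0)))\<^sup>2) (max ((ln (snd (c 0)))\<^sup>2) (W3 (fst (c 0)) (snd (c 0)))))
     * exp (- lam (sqrt (max ((ln (fst (c 0)))\<^sup>2) (max ((ln (snd (c 0)))\<^sup>2) (W3 (fst (c 0)) (snd (c 0)))))) * t)"
proof -
  define u1 where "u1 t = fst (c t)" for t
  define u2 where "u2 t = snd (c t)" for t
  define w1 where "w1 t = (ln (u1 t))\<^sup>2" for t
  define w2 where "w2 t = (ln (u2 t))\<^sup>2" for t
  define w3 where "w3 t = W3 (u1 t) (u2 t)" for t
  define w1' where "w1' t = 2 * ln (u1 t) * (F1 (u1 t) (u2 t) / u1 t)" for t
  define w2' where "w2' t = 2 * ln (u2 t) * (F2 (u1 t) (u2 t) / u2 t)" for t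
  define w3' where "w3' t = - 4 * DD (u1 t) (u2 t) * w3 t" for t
  define M0 where "M0 = max (w1 0) (max (w2 0) (w3 0))"
  define S where "S = sqrt M0"
  define L where "L = lam S"
  have q: "u1 s > 0" "u2 s > 0" if "s \<in> {0..<T}" for s using sol that by (auto simp: quadrant_def u1_def u2_def)
  have D1: "(w1 has_real_derivative w1' s) (at s within {0..<T})" if "s \<in> {0..<T}" for s
    unfolding w1_def w1'_def u1_def u2_def using traj_derivs(1)[OF sol that] by simp
  have D2: "(w2 has_real_derivative w2' s) (at s within {0..<T})" if "s \<in> {0..<T}" for s
    unfolding w2_def w2'_def u1_def u2_def using traj_derivs(2)[OF sol that] by simp
  have D3: "(w3 has_real_derivative w3' s) (at s within {0..<T})" if "s \<in> {0..<T}" for s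
    unfolding w3_def w3'_def u1_def u2_def using traj_derivs(3)[OF sol that] by simp
  have A1: "w1' s \<le> - 2 * DD (u1 s) (u2 s) * exp (- \<bar>ln (u1 s)\<bar>) * w1 s"
    if "s \<in> {0..<T}" "w1 s = max (w1 s) (max (w2 s) (w3 s))" for s
  proof -
    have "max (w1 s) (max (w2 s) (w3 s)) \<le> w1 s" using that(2) by simp
    then have "w2 s \<le> w1 s" "w3 s \<le> w1 s" by simp_all
    then show ?thesis using B1[OF q[OF that(1)]] unfolding w1'_def w1_def w2_def w3_def by simp
  qed
  have A2: "w2' s \<le> - 2 * DD (u1 s) (u2 s) * exp (- \<bar>ln (u2 s)\<bar>) * w2 s"
    if "s \<in> {0..<T}" "w2 s = max (w1 s) (max (w2 s) (w3 s))" for s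
  proof -
    have "max (w1 s) (max (w2 s) (w3 s)) \<le> w2 s" using that(2) by simp
    then have "w1 s \<le> w2 s" "w3 s \<le> w2 s" by simp_all
    then show ?thesis using B2[OF q[OF that(1)]] unfolding w2'_def w1_def w2_def w3_def by simp
  qed
  have w3nn: "w3 s \<ge> 0" for s by (simp add: w3_def W3_def)
  have stage1: "max (w1 s) (max (w2 s) (w3 s)) \<le> M0" if s: "s \<in> {0..<T}" for s
    unfolding M0_def
  proof (rule max3_noninc[OF D1 D2 D3 _ _ _ s])
    fix r assume r: "r \<in> {0..<T}"
    have Dp: "DD (u1 r) (u2 r) > 0" using DD_pos[OF q[OF r]] .
    show "w1' r \<le> 0" if "w1 r = max (w1 r) (max (w2 r) (w3 r))"
    proof -
      have "0 \<le> 2 * DD (u1 r) (u2 r) * exp (- \<bar>ln (u1 r)\<bar>) * w1 r" using Dp by (simp add: w1_def)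
      then show ?thesis using A1[OF r that] by linarith
    qed
    show "w2' r \<le> 0" if "w2 r = max (w1 r) (max (w2 r) (w3 r))"
    proof -
      have "0 \<le> 2 * DD (u1 r) (u2 r) * exp (- \<bar>ln (u2 r)\<bar>) * w2 r" using Dp by (simp add: w2_def)
      then show ?thesis using A2[OF r that] by linarith
    qed
    show "w3' r \<le> 0" if "w3 r = max (w1 r) (max (w2 r) (w3 r))"
      using Dp w3nn[of r] by (simp add: w3'_def)
  qed
  have S0: "S \<ge> 0" unfolding S_def M0_def using w3nn[of 0] by simp
  have xb: "\<bar>ln (u1 s)\<bar> \<le> S" "\<bar>ln (u2 s)\<bar> \<le> S" if s: "s \<in> {0..<T}" for s
    using stage1[OF s] unfolding S_def w1_def w2_def by (auto intro!: sq_le_abs)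
  have Dlow: "DD (u1 s) (u2 s) * exp (- \<bar>ln (u1 s)\<bar>) \<ge> L" "DD (u1 s) (u2 s) * exp (- \<bar>ln (u2 s)\<bar>) \<ge> L"
     "DD (u1 s) (u2 s) \<ge> L" if s: "s \<in> {0..<T}" for s
  proof -
    have y: "u1 s * (u2 s)\<^sup>2 = exp (ln (u1 s) + 2 * ln (u2 s))"
    proof -
      have "2 * ln (u2 s) = ln ((u2 s)\<^sup>2)" using q[OF s] by (simp add: ln_realpow)
      then show ?thesis using q[OF s] by (simp add: exp_add)
    qed
    have "exp (- 3 * S) \<le> u1 s * (u2 s)\<^sup>2" "u1 s * (u2 s)\<^sup>2 \<le> exp (3 * S)"
      unfolding y using xb[OF s] by auto
    from phi_lower[OF this] have Dl: "DD (u1 s) (u2 s) \<ge> exp (- 3 * S) * exp (- (AA * exp (3 * S)))"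
      by (simp add: DD_def)
    have Leq: "L = exp (- S) * (exp (- 3 * S) * exp (- (AA * exp (3 * S))))"
      unfolding L_def lam_def by (simp add: exp_add[symmetric] algebra_simps)
    have e1: "exp (- \<bar>ln (u1 s)\<bar>) \<ge> exp (- S)" "exp (- \<bar>ln (u2 s)\<bar>) \<ge> exp (- S)" using xb[OF s] by auto
    have pos: "exp (- 3 * S) * exp (- (AA * exp (3 * S))) > 0" by simp
    show "DD (u1 s) (u2 s) * exp (- \<bar>ln (u1 s)\<bar>) \<ge> L"
      unfolding Leq using Dl e1(1) pos by (simp add: mult.commute mult_mono)
    show "DD (u1 s) (u2 s) * exp (- \<bar>ln (u2 s)\<bar>) \<ge> L"
      unfolding Leq using Dl e1(2) pos by (simp add: mult.commute mult_mono)
    have "exp (- S) \<le> 1" using S0 by simp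
    then have "exp (- S) * (exp (- 3 * S) * exp (- (AA * exp (3 * S)))) \<le> exp (- 3 * S) * exp (- (AA * exp (3 * S)))"
      using pos by (intro mult_left_le_one_le) auto
    then show "DD (u1 s) (u2 s) \<ge> L" unfolding Leq using Dl by linarith
  qed
  have L0: "L > 0" by (simp add: L_def lam_def)
  define f1 where "f1 s = w1 s * exp (2 * L * s)" for s
  define f2 where "f2 s = w2 s * exp (2 * L * s)" for s
  define f3 where "f3 s = w3 s * exp (2 * L * s)" for s
  have E1: "(f1 has_real_derivative (w1' s + 2 * L * w1 s) * exp (2 * L * s)) (at s within {0..<T})" if "s \<in> {0..<T}" for s
    unfolding f1_def using D1[OF that] by (auto intro!: derivative_eq_intros simp: algebra_simps)
  have E2: "(f2 has_real_derivative (w2' s + 2 * L * w2 s) * exp (2 * L * s)) (at s within {0..<T})" if "s \<in> {0..<T}" for s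
    unfolding f2_def using D2[OF that] by (auto intro!: derivative_eq_intros simp: algebra_simps)
  have E3: "(f3 has_real_derivative (w3' s + 2 * L * w3 s) * exp (2 * L * s)) (at s within {0..<T})" if "s \<in> {0..<T}" for s
    unfolding f3_def using D3[OF that] by (auto intro!: derivative_eq_intros simp: algebra_simps)
  have act: "w_i = max (w1 s) (max (w2 s) (w3 s))"
    if "w_i * exp (2 * L * s) = max (w1 s * exp (2 * L * s)) (max (w2 s * exp (2 * L * s)) (w3 s * exp (2 * L * s)))" for w_i s
    using that by (simp add: max_scale)
  have stage2: "max (f1 t) (max (f2 t) (f3 t)) \<le> max (f1 0) (max (f2 0) (f3 0))"
  proof (rule max3_noninc[OF E1 E2 E3 _ _ _ t])
    fix r assume r: "r \<in> {0..<T}"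
    show "(w1' r + 2 * L * w1 r) * exp (2 * L * r) \<le> 0" if "f1 r = max (f1 r) (max (f2 r) (f3 r))"
    proof -
      have "L * w1 r \<le> (DD (u1 r) (u2 r) * exp (- \<bar>ln (u1 r)\<bar>)) * w1 r"
        using Dlow(1)[OF r] by (intro mult_right_mono) (auto simp: w1_def)
      then have "w1' r \<le> - 2 * L * w1 r"
        using A1[OF r act[OF that[unfolded f1_def f2_def f3_def]]] by (simp add: algebra_simps)
      then show ?thesis by (simp add: mult_nonpos_nonneg)
    qed
    show "(w2' r + 2 * L * w2 r) * exp (2 * L * r) \<le> 0" if "f2 r = max (f1 r) (max (f2 r) (f3 r))"
    proof -
      have "L * w2 r \<le> (DD (u1 r) (u2 r) * exp (- \<bar>ln (u2 r)\<bar>)) * w2 r"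
        using Dlow(2)[OF r] by (intro mult_right_mono) (auto simp: w2_def)
      then have "w2' r \<le> - 2 * L * w2 r"
        using A2[OF r act[OF that[unfolded f1_def f2_def f3_def]]] by (simp add: algebra_simps)
      then show ?thesis by (simp add: mult_nonpos_nonneg)
    qed
    show "(w3' r + 2 * L * w3 r) * exp (2 * L * r) \<le> 0" if "f3 r = max (f1 r) (max (f2 r) (f3 r))"
    proof -
      have "L * w3 r \<le> DD (u1 r) (u2 r) * w3 r"
        using Dlow(3)[OF r] w3nn[of r] by (intro mult_right_mono) auto
      moreover have "0 \<le> L * w3 r" using L0 w3nn[of r] by simp
      ultimately have "w3' r \<le> - 2 * L * w3 r" unfolding w3'_def by linarith
      then show ?thesis by (simp add: mult_nonpos_nonneg)
    qed
  qed
  have f0: "max (f1 0) (max (f2 0) (f3 0)) = M0" by (simp add: f1_def f2_def f3_def M0_def)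
  have "w1 t * exp (2 * L * t) \<le> M0" "w2 t * exp (2 * L * t) \<le> M0"
    using stage2 f0 unfolding f1_def f2_def f3_def by auto
  then have "w1 t \<le> M0 * exp (- (2 * L * t))" "w2 t \<le> M0 * exp (- (2 * L * t))"
    by (simp_all add: exp_minus field_simps)
  then have "w1 t + w2 t \<le> 2 * (M0 * exp (- (2 * L * t)))" by simp
  moreover have "norm (lnv (c t)) = sqrt (w1 t + w2 t)"
    by (simp add: lnv_def norm_Pair w1_def w2_def u1_def u2_def)
  ultimately have "norm (lnv (c t)) \<le> sqrt (2 * (M0 * exp (- (2 * L * t))))" by simp
  also have "\<dots> = sqrt 2 * S * exp (- L * t)"
  proof -
    have "exp (- (2 * L * t)) = (exp (- L * t))\<^sup>2" by (simp add: power2_eq_square exp_add[symmetric])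
    then show ?thesis unfolding S_def by (simp add: real_sqrt_mult)
  qed
  finally show ?thesis unfolding S_def L_def M0_def w1_def w2_def w3_def u1_def u2_def .
qed

definition "bet s = s + KK * aa\<^sup>2 * (exp s - 1)\<^sup>2"
definition "sig s t = sqrt 2 * bet s * exp (- lam (bet s) * t)"

lemma exp_m1_abs: "\<bar>exp x - 1\<bar> \<le> exp \<bar>x\<bar> - 1" for x :: real
proof (cases "x \<ge> 0")
  case True
  then have "1 \<le> exp x" by (simp add: one_le_exp_iff)
  then show ?thesis using True by simp
next
  case False
  then have "\<bar>exp x - 1\<bar> = 1 - exp x" by simp
  moreover have "exp x + exp (- x) \<ge> 2"
  proof -
    have "(exp x - 1)\<^sup>2 \<ge> 0" by simp
    then have "exp x * exp x + 1 \<ge> 2 * exp x" by (simp add: power2_eq_square algebra_simps)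
    then show ?thesis by (simp add: exp_minus field_simps)
  qed
  ultimately show ?thesis using False by simp
qed

lemma S0_le_bet:
  assumes q: "c1 > 0" "c2 > 0"
  shows "sqrt (max ((ln c1)\<^sup>2) (max ((ln c2)\<^sup>2) (W3 c1 c2))) \<le> bet (norm (lnv (c1, c2)))"
proof -
  define s where "s = norm (lnv (c1, c2))"
  have s0: "s \<ge> 0" by (simp add: s_def)
  have x1: "\<bar>ln c1\<bar> \<le> s" unfolding s_def lnv_def
    using norm_fst_le[of "ln c1" "ln c2"] by simp
  have x2: "\<bar>ln c2\<bar> \<le> s" unfolding s_def lnv_def
    using norm_snd_le[of "ln c2" "ln c1"] by (simp add: norm_Pair add.commute)
  have e0: "exp s - 1 \<ge> 0" using s0 by simp
  have b0: "bet s \<ge> s" unfolding bet_def using KK_pos by simp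
  have "\<bar>c1 - 1\<bar> \<le> exp s - 1"
    using exp_m1_abs[of "ln c1"] x1 q by (smt (verit) exp_le_cancel_iff exp_ln)
  moreover have "\<bar>c2 - 1\<bar> \<le> exp s - 1"
    using exp_m1_abs[of "ln c2"] x2 q by (smt (verit) exp_le_cancel_iff exp_ln)
  ultimately have "\<bar>\<mu> * c1 + c2 - aa\<bar> \<le> aa * (exp s - 1)"
  proof -
    assume a: "\<bar>c1 - 1\<bar> \<le> exp s - 1" "\<bar>c2 - 1\<bar> \<le> exp s - 1"
    have "\<bar>\<mu> * c1 + c2 - aa\<bar> = \<bar>\<mu> * (c1 - 1) + (c2 - 1)\<bar>" by (simp add: aa_def algebra_simps)
    also have "\<dots> \<le> \<mu> * \<bar>c1 - 1\<bar> + \<bar>c2 - 1\<bar>" using mu by (simp add: abs_triangle_ineq[THEN order_trans] abs_mult)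
    also have "\<dots> \<le> \<mu> * (exp s - 1) + (exp s - 1)" using a mu by (intro add_mono mult_left_mono) auto
    finally show ?thesis by (simp add: aa_def algebra_simps)
  qed
  then have "(\<mu> * c1 + c2 - aa)\<^sup>2 \<le> (aa * (exp s - 1))\<^sup>2"
    by (metis abs_ge_zero power2_abs power_mono)
  then have "KK * (\<mu> * c1 + c2 - aa)\<^sup>2 \<le> KK * aa\<^sup>2 * (exp s - 1)\<^sup>2"
    using KK_pos by (simp add: power_mult_distrib mult.assoc)
  also have "\<dots> \<le> bet s" unfolding bet_def using s0 by simp
  finally have g: "KK * (\<mu> * c1 + c2 - aa)\<^sup>2 \<le> bet s" .
  have "W3 c1 c2 \<le> (bet s)\<^sup>2" unfolding W3_def using g KK_pos by (intro power_mono) auto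
  moreover have "(ln c1)\<^sup>2 \<le> (bet s)\<^sup>2" using x1 b0 by (metis abs_ge_zero order.trans power2_abs power_mono)
  moreover have "(ln c2)\<^sup>2 \<le> (bet s)\<^sup>2" using x2 b0 by (metis abs_ge_zero order.trans power2_abs power_mono)
  ultimately have "max ((ln c1)\<^sup>2) (max ((ln c2)\<^sup>2) (W3 c1 c2)) \<le> (bet s)\<^sup>2" by simp
  then have "sqrt (max ((ln c1)\<^sup>2) (max ((ln c2)\<^sup>2) (W3 c1 c2))) \<le> sqrt ((bet s)\<^sup>2)" by (rule real_sqrt_le_mono)
  also have "\<dots> = bet s" using b0 s0 by simp
  finally show ?thesis by (simp add: s_def)
qed

lemma lam_anti: "S \<le> S' \<Longrightarrow> lam S' \<le> lam S"
proof -
  assume a: "S \<le> S'"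
  have "exp (3 * S) \<le> exp (3 * S')" using a by simp
  then have "AA * exp (3 * S) \<le> AA * exp (3 * S')" using AA_pos by (simp add: mult_left_mono)
  then show ?thesis unfolding lam_def using a by simp
qed

lemma lam_pos: "lam S > 0" by (simp add: lam_def)

lemma bet_mono: "0 \<le> s \<Longrightarrow> s < s' \<Longrightarrow> bet s < bet s'"
proof -
  assume a: "0 \<le> s" "s < s'"
  have "exp s - 1 \<le> exp s' - 1" "0 \<le> exp s - 1" using a by auto
  then have "(exp s - 1)\<^sup>2 \<le> (exp s' - 1)\<^sup>2" by (simp add: power_mono)
  then have "KK * aa\<^sup>2 * (exp s - 1)\<^sup>2 \<le> KK * aa\<^sup>2 * (exp s' - 1)\<^sup>2"
    using KK_pos by (intro mult_left_mono) auto
  then show ?thesis unfolding bet_def using a by simp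
qed

lemma bet_nonneg: "0 \<le> s \<Longrightarrow> 0 \<le> bet s" unfolding bet_def using KK_pos by simp

lemma sol_bound:
  assumes sol: "\<forall>t\<in>{0..<T}. c t \<in> quadrant \<and> (c has_vector_derivative rhs \<theta> \<mu> (kk (c t)) (c t)) (at t within {0..<T})"
    and t: "t \<in> {0..<T}"
  shows "norm (lnv (c t)) \<le> sig (norm (lnv (c 0))) t"
proof -
  define S where "S = sqrt (max ((ln (fst (c 0)))\<^sup>2) (max ((ln (snd (c 0)))\<^sup>2) (W3 (fst (c 0)) (snd (c 0)))))"
  have q: "fst (c 0) > 0" "snd (c 0) > 0" using sol t by (auto simp: quadrant_def)
  have Sb: "S \<le> bet (norm (lnv (c 0)))" unfolding S_def using S0_le_bet[OF q] by simp
  have S0: "S \<ge> 0" unfolding S_def by (simp add: W3_def le_max_iff_disj)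
  have t0: "t \<ge> 0" using t by simp
  have "norm (lnv (c t)) \<le> sqrt 2 * S * exp (- lam S * t)" using traj_bound[OF sol t] unfolding S_def .
  also have "\<dots> \<le> sqrt 2 * bet (norm (lnv (c 0))) * exp (- lam (bet (norm (lnv (c 0)))) * t)"
  proof -
    have "lam (bet (norm (lnv (c 0)))) * t \<le> lam S * t" using lam_anti[OF Sb] t0 by (rule mult_right_mono)
    then have "exp (- lam S * t) \<le> exp (- lam (bet (norm (lnv (c 0)))) * t)" by simp
    then show ?thesis using Sb S0 by (intro mult_mono) auto
  qed
  finally show ?thesis unfolding sig_def .
qed

lemma KL_sig: "KL (\<lambda>s t. sig s t)"
proof -
  have c: "continuous_on ({0..} \<times> {0..}) (\<lambda>(s, t). sig s t)"
    unfolding sig_def bet_def lam_def case_prod_beta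
    by (intro continuous_intros)
  have nn: "\<forall>s\<ge>0. \<forall>t\<ge>0. sig s t \<ge> 0" using bet_nonneg by (simp add: sig_def)
  have dec: "\<forall>t1 t2. 0 \<le> t1 \<longrightarrow> t1 \<le> t2 \<longrightarrow> sig s t2 \<le> sig s t1" if s: "0 \<le> s" for s
  proof (intro allI impI)
    fix t1 t2 :: real assume "0 \<le> t1" "t1 \<le> t2"
    then have "lam (bet s) * t1 \<le> lam (bet s) * t2"
      using lam_pos[of "bet s"] by (simp add: mult_left_mono)
    then have "exp (- lam (bet s) * t2) \<le> exp (- lam (bet s) * t1)" by simp
    then show "sig s t2 \<le> sig s t1" unfolding sig_def using bet_nonneg[OF s]
      by (intro mult_left_mono) auto
  qed
  have lim: "((\<lambda>t. sig s t) \<longlongrightarrow> 0) at_top" for s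
  proof -
    have "((\<lambda>t. exp (- lam (bet s) * t)) \<longlongrightarrow> 0) at_top"
      using lam_pos[of "bet s"] by real_asymp
    then have "((\<lambda>t. sqrt 2 * bet s * exp (- lam (bet s) * t)) \<longlongrightarrow> sqrt 2 * bet s * 0) at_top"
      by (intro tendsto_mult tendsto_const)
    then show ?thesis by (simp add: sig_def)
  qed
  have z: "sig 0 t = 0" for t by (simp add: sig_def bet_def)
  have sm: "strict_mono_on {0..} (\<lambda>s. sig s t)" if t: "0 \<le> t" for t
  proof (rule strict_mono_onI)
    fix r s :: real assume "r \<in> {0..}" "s \<in> {0..}" "r < s"
    then have r0: "0 \<le> r" and rs: "r < s" by auto
    have b: "bet r < bet s" by (rule bet_mono[OF r0 rs])
    have "lam (bet s) * t \<le> lam (bet r) * t" using lam_anti[OF less_imp_le[OF b]] t by (rule mult_right_mono)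
    then have e: "exp (- lam (bet r) * t) \<le> exp (- lam (bet s) * t)" by simp
    have "bet r * exp (- lam (bet r) * t) \<le> bet r * exp (- lam (bet s) * t)"
      using e bet_nonneg[OF r0] by (rule mult_left_mono)
    also have "\<dots> < bet s * exp (- lam (bet s) * t)" using b by simp
    finally show "sig r t < sig s t" unfolding sig_def by simp
  qed
  show ?thesis unfolding KL_def using c nn dec lim z sm by blast
qed

lemma smooth_phi: "smooth1 phi"
proof -
  have e: "phi = (\<lambda>y. y * exp ((- AA * y) * sb (y - P0)))" by (auto simp: phi_def fun_eq_iff)
  show ?thesis unfolding e
    by (intro smooth1_mult smooth1_id smooth1_exp smooth1_const smooth1_shift smooth1_sb)
qed

lemma smooth_kk: "smooth_on2 S kk"
  unfolding kk_def[abs_def] by (rule smooth_on2_comp_p[OF smooth_phi])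

lemma kk_range: "x \<in> quadrant \<Longrightarrow> kk x \<in> {0..Dmax}"
  unfolding kk_def quadrant_def using phi_pos phi_Dmax
  by (auto intro!: less_imp_le)

lemma kk11: "kk (1, 1) = 1" by (simp add: kk_def phi1)

end

theorem mainTheorem9:
  fixes \<theta> \<mu> Dmax :: real
  assumes "\<theta> > 0" and "0 < \<mu>" and "\<mu> < 1 / \<theta>"
    and "Dmax > (1 + \<mu>)\<^sup>2"
    and "Dmax > (1 + \<mu>) * (\<theta> * (1 + \<mu>)\<^sup>2 + 1) / (\<mu> * \<theta>)"
  shows "\<exists>k :: real \<times> real \<Rightarrow> real.
           smooth_on2 quadrant k \<and>
           (\<forall>x\<in>quadrant. k x \<in> {0..Dmax}) \<and>
           k (1, 1) = 1 \<and>
           (\<exists>\<sigma>. KL \<sigma> \<and>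
              (\<forall>T > 0. \<forall>c :: real \<Rightarrow> real \<times> real.
                 (\<forall>t\<in>{0..<T}. c t \<in> quadrant \<and>
                    (c has_vector_derivative rhs \<theta> \<mu> (k (c t)) (c t)) (at t within {0..<T}))
                 \<longrightarrow> (\<forall>t\<in>{0..<T}. norm (lnv (c t)) \<le> \<sigma> (norm (lnv (c 0))) t)))"
proof -
  interpret sys \<theta> \<mu> Dmax using assms by unfold_locales auto
  have "KL (\<lambda>s t. sig s t) \<and>
              (\<forall>T > 0. \<forall>c :: real \<Rightarrow> real \<times> real.
                 (\<forall>t\<in>{0..<T}. c t \<in> quadrant \<and>
                    (c has_vector_derivative rhs \<theta> \<mu> (kk (c t)) (c t)) (at t within {0..<T}))
                 \<longrightarrow> (\<forall>t\<in>{0..<T}. norm (lnv (c t)) \<le> sig (norm (lnv (c 0))) t))"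
    using KL_sig sol_bound by blast
  then show ?thesis
    using smooth_kk kk_range kk11 by blast
qed

end
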